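(* Let $A,B\in \mathbb{R}^{m\times n}$ with $m<n$ and $b\in \mathbb{R}^m$. If the equation $Ax-B|x|=b$ has a solution with more than $m$ nonzero entries, then it has infinitely many solutions with the same sign pattern as that known solution.
   Context: $|x|$ is the entrywise absolute value. Two vectors have the same sign pattern if their entrywise signs (in $\{-1,0,1\}$) agree. *)

theory Defs
  imports "HOL-Analysis.Analysis"
begin

definition vabs :: "real ^ 'n \<Rightarrow> real ^ 'n" where
  "vabs x = (\<chi> i. \<bar>x $ i\<bar>)"

definition same_sign_pattern :: "real ^ 'n \<Rightarrow> real ^ 'n \<Rightarrow> bool" where
  "same_sign_pattern x y \<longleftrightarrow> (\<forall>i. sgn (x $ i) = sgn (y $ i))"

end

theory Submission
  imports Defs
begin

lemma kernel_vec:
  fixes A B :: "real ^ 'n ^ 'm" and x0 :: "real ^ 'n"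
  assumes "card {i. x0 $ i \<noteq> 0} > CARD('m)"
  shows "\<exists>v::real^'n. v \<noteq> 0 \<and> (\<forall>j. x0$j = 0 \<longrightarrow> v$j = 0) \<and>
     (\<forall>k. (\<Sum>j\<in>UNIV. (A$k$j - B$k$j * sgn (x0$j)) * v$j) = 0)"
proof -
  define S where "S = {i. x0 $ i \<noteq> 0}"
  define c where "c j = (\<chi> k. A$k$j - B$k$j * sgn (x0$j))" for j
  show ?thesis
  proof (cases "inj_on c S")
    case False
    then obtain j l where jl: "j \<in> S" "l \<in> S" "j \<noteq> l" "c j = c l"
      unfolding inj_on_def by blast
    define v :: "real^'n" where "v = axis j 1 - axis l 1"
    have "v $ j = 1" using jl by (simp add: v_def axis_def)
    hence "v \<noteq> 0" by auto
    moreover have "\<forall>i. x0$i = 0 \<longrightarrow> v$i = 0" using jl by (auto simp: v_def axis_def S_def)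
    moreover have "(\<Sum>i\<in>UNIV. (A$k$i - B$k$i * sgn (x0$i)) * v$i) = 0" for k
    proof -
      have e: "(A$k$i - B$k$i * sgn (x0$i)) = c i $ k" for i by (simp add: c_def)
      have "(\<Sum>i\<in>UNIV. c i $ k * v$i) = (\<Sum>i\<in>UNIV. c i $ k * (if i = j then 1 else 0))
             - (\<Sum>i\<in>UNIV. c i $ k * (if i = l then 1 else 0))"
        by (simp add: v_def axis_def right_diff_distrib sum_subtractf)
      also have "\<dots> = 0" using jl by (simp add: if_distrib cong: if_cong)
      finally show ?thesis by (simp add: e)
    qed
    ultimately show ?thesis by blast
  next
    case True
    have "card (c ` S) > DIM(real^'m)"
      using True assms by (simp add: card_image S_def)
    hence "dependent (c ` S)" using dependent_biggerset[of "c ` S"] by auto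
    then obtain T u where T: "finite T" "T \<subseteq> c ` S" "(\<Sum>w\<in>T. u w *\<^sub>R w) = 0"
      "\<exists>w\<in>T. u w \<noteq> 0"
      unfolding dependent_explicit by auto
    define v :: "real^'n" where "v = (\<chi> j. if j \<in> S \<and> c j \<in> T then u (c j) else 0)"
    obtain w where w: "w \<in> T" "u w \<noteq> 0" using T by auto
    then obtain j where j: "j \<in> S" "w = c j" using T by auto
    have "v $ j \<noteq> 0" using w j by (simp add: v_def)
    hence "v \<noteq> 0" by auto
    moreover have "\<forall>i. x0$i = 0 \<longrightarrow> v$i = 0" by (auto simp: v_def S_def)
    moreover have "(\<Sum>i\<in>UNIV. (A$k$i - B$k$i * sgn (x0$i)) * v$i) = 0" for k
    proof -
      let ?U = "{i. i \<in> S \<and> c i \<in> T}"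
      have e: "(A$k$i - B$k$i * sgn (x0$i)) = c i $ k" for i by (simp add: c_def)
      have "(\<Sum>i\<in>UNIV. c i $ k * v$i) = (\<Sum>i\<in>?U. c i $ k * u (c i))"
        by (rule sum.mono_neutral_cong_right) (auto simp: v_def)
      also have "\<dots> = (\<Sum>w\<in>c ` ?U. w $ k * u w)"
        by (rule sum.reindex[symmetric, unfolded comp_def]) (use True in \<open>auto simp: inj_on_def\<close>)
      also have "c ` ?U = T" using T(2) by auto
      also have "(\<Sum>w\<in>T. w $ k * u w) = (\<Sum>w\<in>T. u w *\<^sub>R w) $ k"
        by (simp add: mult.commute)
      also have "\<dots> = 0" using T(3) by simp
      finally show ?thesis by (simp add: e)
    qed
    ultimately show ?thesis by blast
  qed
qed

theorem corollary3p2: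
  fixes A B :: "real ^ 'n ^ 'm" and b :: "real ^ 'm" and x0 :: "real ^ 'n"
  assumes "CARD('m) < CARD('n)"
    and "A *v x0 - B *v vabs x0 = b"
    and "card {i. x0 $ i \<noteq> 0} > CARD('m)"
  shows "infinite {x. A *v x - B *v vabs x = b \<and> same_sign_pattern x x0}"
proof -
  obtain v :: "real^'n" where v: "v \<noteq> 0" "\<forall>j. x0$j = 0 \<longrightarrow> v$j = 0"
     "\<forall>k. (\<Sum>j\<in>UNIV. (A$k$j - B$k$j * sgn (x0$j)) * v$j) = 0"
    using kernel_vec[OF assms(3)] by blast
  define S where "S = {i. x0 $ i \<noteq> 0}"
  have Sne: "S \<noteq> {}" using assms(3) S_def by (metis card.empty not_less0)
  define \<epsilon> where "\<epsilon> = Min ((\<lambda>j. \<bar>x0$j\<bar> / (\<bar>v$j\<bar> + 1)) ` S)"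
  have epos: "\<epsilon> > 0" unfolding \<epsilon>_def using Sne
    by (subst Min_gr_iff) (auto simp: S_def)
  have ele: "\<epsilon> \<le> \<bar>x0$j\<bar> / (\<bar>v$j\<bar> + 1)" if "j \<in> S" for j
    unfolding \<epsilon>_def using that by (intro Min_le) auto
  have good: "x0 + t *\<^sub>R v \<in> {x. A *v x - B *v vabs x = b \<and> same_sign_pattern x x0}"
    if t: "0 < t" "t < \<epsilon>" for t
  proof -
    let ?x = "x0 + t *\<^sub>R v"
    have sg: "sgn (?x $ j) = sgn (x0 $ j)" for j
    proof (cases "j \<in> S")
      case True
      have "t * (\<bar>v$j\<bar> + 1) < \<epsilon> * (\<bar>v$j\<bar> + 1)" using t by (intro mult_strict_right_mono) auto
      also have "\<dots> \<le> \<bar>x0$j\<bar>" using ele[OF True] by (simp add: field_simps)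
      finally have "\<bar>t * v$j\<bar> < \<bar>x0$j\<bar>" using t by (simp add: abs_mult field_simps)
      then show ?thesis by (auto simp: sgn_if abs_if split: if_splits)
    next
      case False
      then show ?thesis using v(2) by (simp add: S_def)
    qed
    have ab: "vabs ?x $ j = \<bar>x0$j\<bar> + t * (sgn (x0$j) * v$j)" for j
    proof -
      have "\<bar>?x$j\<bar> = sgn (?x$j) * ?x$j" by (cases "?x$j" "0::real" rule: linorder_cases) auto
      also have "\<dots> = sgn (x0$j) * (x0$j + t * v$j)" using sg by simp
      also have "\<dots> = \<bar>x0$j\<bar> + t * (sgn (x0$j) * v$j)"
        by (cases "x0$j" "0::real" rule: linorder_cases) (auto simp: algebra_simps)
      finally show ?thesis by (simp add: vabs_def)
    qed
    have "(A *v ?x - B *v vabs ?x) $ k = b $ k" for k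
    proof -
      have "(A *v ?x - B *v vabs ?x) $ k =
          (\<Sum>j\<in>UNIV. A$k$j * (x0$j + t * v$j)) - (\<Sum>j\<in>UNIV. B$k$j * (\<bar>x0$j\<bar> + t * (sgn (x0$j) * v$j)))"
        by (simp add: matrix_vector_mult_def ab)
      also have "\<dots> = ((\<Sum>j\<in>UNIV. A$k$j * x0$j) - (\<Sum>j\<in>UNIV. B$k$j * \<bar>x0$j\<bar>))
          + t * (\<Sum>j\<in>UNIV. (A$k$j - B$k$j * sgn (x0$j)) * v$j)"
        by (simp add: algebra_simps sum.distrib sum_distrib_left sum_subtractf)
      also have "\<dots> = (A *v x0 - B *v vabs x0) $ k"
        using v(3) by (simp add: matrix_vector_mult_def vabs_def)
      finally show ?thesis using assms(2) by simp
    qed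
    hence "A *v ?x - B *v vabs ?x = b" by (simp add: vec_eq_iff)
    moreover have "same_sign_pattern ?x x0" using sg by (simp add: same_sign_pattern_def)
    ultimately show ?thesis by simp
  qed
  have inj: "inj_on (\<lambda>t. x0 + t *\<^sub>R v) {0<..<\<epsilon>}"
    using v(1) by (auto simp: inj_on_def)
  have "infinite ((\<lambda>t. x0 + t *\<^sub>R v) ` {0<..<\<epsilon>})"
    using inj infinite_Ioo[OF epos] finite_imageD by blast
  moreover have "(\<lambda>t. x0 + t *\<^sub>R v) ` {0<..<\<epsilon>} \<subseteq> {x. A *v x - B *v vabs x = b \<and> same_sign_pattern x x0}"
    using good by auto
  ultimately show ?thesis using finite_subset by blast
qed

end
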